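(* Assume Hypothesis (LD). Assume the $\rho$-basic classes contained in $M_1$ are finitely many, $K_1,\dots,K_v$, each closed. Let $K_j$ be one of them which is not a $\rho$-quasiattractor. Then there exists $\eta>0$ with the following property. For every $\gamma>0$ there exist $\varepsilon_0>0$ and a function $\zeta:(0,\varepsilon_0)\to[0,1]$ with $\lim_{\varepsilon\to0}\zeta(\varepsilon)=0$ such that $$\sup_{x\in N^\eta(K_j)}\mathbb{P}_x\big[\tau^\varepsilon_{N^\eta(K_j)}>e^{\gamma/\varepsilon}\big]\le\zeta(\varepsilon)\quad\text{for all }\varepsilon<\varepsilon_0.$$ Here $\tau^\varepsilon_V=\inf\{n\ge0:X^\varepsilon_n\notin V\}$.
   Context: Setting. Let $M\subset\mathbb{R}^d$ be closed; all topological notions are relative to $M$. Let $F:M\to M$ be continuous with $\|F\|:=\sup_{x\in M}\|F(x)\|<\infty$. For $A\subset M$ and $\delta>0$, put $N^\delta(A)=\{x\in M:\inf_{y\in A}\|x-y\|<\delta\}$, and let $d(x,y)=\max_i|x_i-y_i|$. Let $\{X^\varepsilon\}_{\varepsilon>0}$ be a family of time-homogeneous Markov chains on $M$ with transition kernels $p^\varepsilon(x,\Gamma)$. $\mathbb{P}_x$ is the law of the chain with $X^\varepsilon_0=x$. Assume $M=M_0\cup M_1$ (disjoint), where $M_0$ is closed, $F(M_0)\subseteq M_0$, $F(M_1)\subseteq M_1$, and $p^\varepsilon(x,M_1)=0$ for all $\varepsilon>0$ and $x\in M_0$. $\rho$-chain recurrence. Given $\rho:M\times M\to[0,+\infty]$,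 for $\xi=(\xi_0,\dots,\xi_n)\in M^{n+1}$ set $A_n(\xi)=\sum_{i=0}^{n-1}\rho(\xi_i,\xi_{i+1})$. Set $B_\rho(x,y)=\inf\{A_n(\xi):n\ge1,\ \xi\in M^{n+1},\ \xi_0=x,\ \xi_n=y\}$. Write $x<_\rho y$ if $B_\rho(x,y)=0$, and $x\sim_\rho y$ if $x<_\rho y$ and $y<_\rho x$. Let $\mathcal{R}_\rho=\{x:x\sim_\rho x\}$. The $\rho$-basic classes are the equivalence classes $[x]_\rho$ of $\sim_\rho$ on $\mathcal{R}_\rho$. Write $[x]_\rho<_\rho[y]_\rho$ if $x<_\rho y$. A $\rho$-quasiattractor is a maximal $\rho$-basic class. Hypothesis (LD). There is $\rho:M\times M\to[0,+\infty]$ such that: (i) $\rho$ is continuous on $M_1\times M$; (ii) $\rho(x,y)=0$ iff $y=F(x)$; (iii) for every $\beta>0$, $\inf\{\rho(x,y):x,y\in M,\ d(F(x),y)>\beta\}>0$; (iv) lower bound: for every compact $K\subset M_1$, every open ball $U$ of $M$ and every $\eta>0$, there is $\varepsilon_0>0$ such that $\varepsilon\log p^\varepsilon(x,U)\ge-\inf_{y\in U}\rho(x,y)-\eta$ for all $x\in K$ and $\varepsilon<\varepsilon_0$; (v) upper bound: for every closed $C\subset M$ and every $\eta>0$, there is $\varepsilon_0>0$ such that $\varepsilon\log p^\varepsilon(x,C)\le-\inf_{y\in C}\rho(x,y)+\eta$ for all $x\in M$ and $\varepsilon<\varepsilon_0$. *)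

theory Defs
  imports "HOL-Probability.Probability"
begin

definition dmax :: "real^'n \<Rightarrow> real^'n \<Rightarrow> real" where
  "dmax x y = Max (range (\<lambda>i. \<bar>x$i - y$i\<bar>))"

definition nbhd :: "'a::metric_space set \<Rightarrow> real \<Rightarrow> 'a set \<Rightarrow> 'a set" where
  "nbhd M \<delta> A = {x\<in>M. (INF y\<in>A. ereal (dist x y)) < ereal \<delta>}"

definition chain_cost :: "('a \<Rightarrow> 'a \<Rightarrow> ennreal) \<Rightarrow> (nat \<Rightarrow> 'a) \<Rightarrow> nat \<Rightarrow> ennreal" where
  "chain_cost \<rho> \<xi> n = (\<Sum>i<n. \<rho> (\<xi> i) (\<xi> (Suc i)))"

definition B_rho :: "'a set \<Rightarrow> ('a \<Rightarrow> 'a \<Rightarrow> ennreal) \<Rightarrow> 'a \<Rightarrow> 'a \<Rightarrow> ennreal" where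
  "B_rho M \<rho> x y = (INF (n, \<xi>)\<in>{(n, \<xi>). n \<ge> 1 \<and> (\<forall>i\<le>n. \<xi> i \<in> M) \<and> \<xi> 0 = x \<and> \<xi> n = y}.
       chain_cost \<rho> \<xi> n)"

definition rho_le :: "'a set \<Rightarrow> ('a \<Rightarrow> 'a \<Rightarrow> ennreal) \<Rightarrow> 'a \<Rightarrow> 'a \<Rightarrow> bool" where
  "rho_le M \<rho> x y \<longleftrightarrow> B_rho M \<rho> x y = 0"

definition rho_sim :: "'a set \<Rightarrow> ('a \<Rightarrow> 'a \<Rightarrow> ennreal) \<Rightarrow> 'a \<Rightarrow> 'a \<Rightarrow> bool" where
  "rho_sim M \<rho> x y \<longleftrightarrow> rho_le M \<rho> x y \<and> rho_le M \<rho> y x"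

definition rho_recurrent :: "'a set \<Rightarrow> ('a \<Rightarrow> 'a \<Rightarrow> ennreal) \<Rightarrow> 'a set" where
  "rho_recurrent M \<rho> = {x\<in>M. rho_sim M \<rho> x x}"

definition rho_class :: "'a set \<Rightarrow> ('a \<Rightarrow> 'a \<Rightarrow> ennreal) \<Rightarrow> 'a \<Rightarrow> 'a set" where
  "rho_class M \<rho> x = {y \<in> rho_recurrent M \<rho>. rho_sim M \<rho> x y}"

definition basic_class :: "'a set \<Rightarrow> ('a \<Rightarrow> 'a \<Rightarrow> ennreal) \<Rightarrow> 'a set \<Rightarrow> bool" where
  "basic_class M \<rho> K \<longleftrightarrow> (\<exists>x\<in>rho_recurrent M \<rho>. K = rho_class M \<rho> x)"

text \<open>[x] <_rho [y] iff x <_rho y (independent of representatives).\<close>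
definition class_le :: "'a set \<Rightarrow> ('a \<Rightarrow> 'a \<Rightarrow> ennreal) \<Rightarrow> 'a set \<Rightarrow> 'a set \<Rightarrow> bool" where
  "class_le M \<rho> K K' \<longleftrightarrow> (\<exists>x\<in>K. \<exists>y\<in>K'. rho_le M \<rho> x y)"

definition quasiattractor :: "'a set \<Rightarrow> ('a \<Rightarrow> 'a \<Rightarrow> ennreal) \<Rightarrow> 'a set \<Rightarrow> bool" where
  "quasiattractor M \<rho> K \<longleftrightarrow> basic_class M \<rho> K \<and>
     (\<forall>K'. basic_class M \<rho> K' \<and> class_le M \<rho> K K' \<longrightarrow> K' = K)"

text \<open>stay_prob p V n x = P_x[X_0 \<in> V, ..., X_n \<in> V] for the Markov chain with kernel p.\<close>
fun stay_prob :: "('a \<Rightarrow> 'a measure) \<Rightarrow> 'a set \<Rightarrow> nat \<Rightarrow> 'a \<Rightarrow> real" where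
  "stay_prob p V 0 x = indicator V x"
| "stay_prob p V (Suc n) x = indicator V x * (\<integral>y. stay_prob p V n y \<partial>(p x))"

text \<open>P_x[tau_V > t] for real t \<ge> 0: the chain stays in V at all times n \<le> t.\<close>
definition exit_later :: "('a \<Rightarrow> 'a measure) \<Rightarrow> 'a set \<Rightarrow> real \<Rightarrow> 'a \<Rightarrow> real" where
  "exit_later p V t x = stay_prob p V (nat \<lfloor>t\<rfloor>) x"

end

theory Submission
  imports Defs "HOL-Real_Asymp.Real_Asymp"
begin

lemma sub_int:
  assumes "subprob_space N" "f \<in> borel_measurable N" "\<And>x. 0 \<le> f x" "\<And>x. f x \<le> (1::real)"
  shows "integrable N f" "0 \<le> integral\<^sup>L N f" "integral\<^sup>L N f \<le> 1"
proof -
  interpret subprob_space N by fact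
  show i: "integrable N f"
    by (rule integrable_const_bound[where B=1]) (use assms in auto)
  show "0 \<le> integral\<^sup>L N f" using assms by (auto intro: integral_nonneg_AE)
  have "integral\<^sup>L N f \<le> integral\<^sup>L N (\<lambda>x. 1)"
    by (rule integral_mono[OF i]) (use assms in auto)
  also have "\<dots> = measure N (space N)" by simp
  also have "\<dots> \<le> 1" by (rule subprob_measure_le_1)
  finally show "integral\<^sup>L N f \<le> 1" .
qed

locale kern =
  fixes P :: "'a::topological_space \<Rightarrow> 'a measure" and V :: "'a set"
  assumes P_meas: "P \<in> borel \<rightarrow>\<^sub>M subprob_algebra borel"
    and V_borel: "V \<in> sets borel"
begin

lemma subP: "subprob_space (P x)"
  using subprob_space_kernel[OF P_meas] by simp

lemma setsP: "sets (P x) = sets borel"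
  using sets_kernel[OF P_meas] by simp

lemma sp_meas: "stay_prob P V n \<in> borel_measurable borel"
proof (induction n)
  case 0
  then show ?case using V_borel by simp
next
  case (Suc n)
  have "(\<lambda>x. integral\<^sup>L (P x) (stay_prob P V n)) \<in> borel_measurable borel"
    by (rule measurable_compose[OF P_meas integral_measurable_subprob_algebra[OF Suc]])
  then show ?case using V_borel by simp
qed

lemma sp_bounds: "0 \<le> stay_prob P V n x \<and> stay_prob P V n x \<le> 1"
proof (induction n arbitrary: x)
  case 0
  then show ?case by (simp add: indicator_def)
next
  case (Suc n)
  have m: "stay_prob P V n \<in> borel_measurable (P x)"
    using sp_meas measurable_cong_sets[OF setsP refl] by blast
  note I = sub_int[OF subP m]
  have i1: "integral\<^sup>L (P x) (stay_prob P V n) \<le> 1" using I Suc by blast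
  have i0: "0 \<le> integral\<^sup>L (P x) (stay_prob P V n)" using I Suc by blast
  show ?case using i0 i1 by (auto simp: indicator_def)
qed

lemma sp_out: "x \<notin> V \<Longrightarrow> stay_prob P V n x = 0"
  by (cases n) auto

lemma sp_measP: "stay_prob P V n \<in> borel_measurable (P x)"
  using sp_meas measurable_cong_sets[OF setsP refl] by blast

lemma sp_int: "integrable (P x) (stay_prob P V n)"
  using sub_int(1)[OF subP sp_measP] sp_bounds by blast

lemma sp_Suc_le: "stay_prob P V (Suc n) x \<le> stay_prob P V n x"
proof (induction n arbitrary: x)
  case 0
  have "integral\<^sup>L (P x) (stay_prob P V 0) \<le> 1"
    using sub_int(3)[OF subP sp_measP] sp_bounds by blast
  then show ?case by (auto simp: indicator_def)
next
  case (Suc n)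
  have "integral\<^sup>L (P x) (stay_prob P V (Suc n)) \<le> integral\<^sup>L (P x) (stay_prob P V n)"
    by (rule integral_mono[OF sp_int sp_int]) (use Suc in auto)
  then show ?case by (auto simp: indicator_def)
qed

lemma sp_antimono: "n \<le> m \<Longrightarrow> stay_prob P V m x \<le> stay_prob P V n x"
proof (induction m)
  case 0
  then show ?case by simp
next
  case (Suc m)
  then show ?case
    by (metis le_SucE order.refl order_trans sp_Suc_le)
qed

lemma sp_mult:
  assumes c: "\<And>y. stay_prob P V n y \<le> c"
  shows "stay_prob P V (m + n) x \<le> c * stay_prob P V m x"
proof (induction m arbitrary: x)
  case 0
  show ?case
  proof (cases "x \<in> V")
    case True
    then show ?thesis using c[of x] by simp
  next
    case False
    then show ?thesis using sp_out[OF False, of n] by simp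
  qed
next
  case (Suc m)
  have "integral\<^sup>L (P x) (stay_prob P V (m + n)) \<le> integral\<^sup>L (P x) (\<lambda>y. c * stay_prob P V m y)"
    by (rule integral_mono[OF sp_int]) (use Suc sp_int in auto)
  also have "\<dots> = c * integral\<^sup>L (P x) (stay_prob P V m)" by simp
  finally have "integral\<^sup>L (P x) (stay_prob P V (m + n)) \<le> c * integral\<^sup>L (P x) (stay_prob P V m)" .
  then show ?case by (auto simp: indicator_def)
qed

lemma sp_pow:
  assumes c: "\<And>y. stay_prob P V L y \<le> c"
  shows "stay_prob P V (k * L) x \<le> c ^ k"
proof (induction k arbitrary: x)
  case 0
  then show ?case using sp_bounds by simp
next
  case (Suc k)
  have c0: "0 \<le> c" using c[of x] sp_bounds[of L x] by linarith
  have "stay_prob P V (Suc k * L) x = stay_prob P V (L + k * L) x" by (simp add: add.commute)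
  also have "\<dots> \<le> c ^ k * stay_prob P V L x"
    by (rule sp_mult) (use Suc in auto)
  also have "\<dots> \<le> c ^ k * c" by (rule mult_left_mono[OF c]) (use c0 in simp)
  finally show ?case by (simp add: mult.commute)
qed

lemma sp_step:
  assumes ps: "prob_space (P x)" and B: "B \<in> sets borel"
    and Q: "0 \<le> Q" "Q \<le> 1"
    and fB: "\<And>y. y \<in> B \<Longrightarrow> stay_prob P V n y \<le> 1 - Q"
    and a: "0 \<le> a" "ennreal a \<le> emeasure (P x) B"
  shows "stay_prob P V (Suc n) x \<le> 1 - Q * a"
proof -
  interpret prob_space "P x" by (rule ps)
  have Bs: "B \<in> sets (P x)" using B setsP by simp
  have am: "a \<le> measure (P x) B"
    using a by (simp add: emeasure_eq_measure)
  have le1: "measure (P x) B \<le> 1" by simp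
  have ib: "integrable (P x) (indicat_real B)"
    using Bs by (simp add: integrable_indicator_iff less_top[symmetric])
  have "integral\<^sup>L (P x) (stay_prob P V n) \<le> integral\<^sup>L (P x) (\<lambda>y. 1 - Q * indicator B y)"
  proof (rule integral_mono[OF sp_int])
    show "integrable (P x) (\<lambda>y. 1 - Q * indicator B y)"
      using Bs ib by (intro Bochner_Integration.integrable_diff) auto
    fix y show "stay_prob P V n y \<le> 1 - Q * indicator B y"
      using fB[of y] sp_bounds[of n y] by (auto simp: indicator_def)
  qed
  also have "\<dots> = 1 - Q * measure (P x) B"
    using Bs by (subst Bochner_Integration.integral_diff) (use ib in \<open>auto simp: prob_space\<close>)
  also have "\<dots> \<le> 1 - Q * a" using am Q by (simp add: mult_left_mono)
  finally have I: "integral\<^sup>L (P x) (stay_prob P V n) \<le> 1 - Q * a" .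
  have "Q * a \<le> 1" using am le1 Q
    by (metis dual_order.trans mult_le_one a(1))
  then show ?thesis using I by (auto simp: indicator_def)
qed

end

lemma sum_split_add: "(\<Sum>i<n+m. f i) = (\<Sum>i<n. f i) + (\<Sum>j<m. f (n+j :: nat))"
  for f :: "nat \<Rightarrow> 'b::comm_monoid_add"
  by (induction m) (auto simp: add.assoc)

lemma B_le:
  assumes "n \<ge> 1" "\<forall>i\<le>n. \<xi> i \<in> M" "\<xi> 0 = x" "\<xi> n = y"
  shows "B_rho M \<rho> x y \<le> chain_cost \<rho> \<xi> n"
  unfolding B_rho_def
  by (rule INF_lower2[of "(n, \<xi>)"]) (use assms in auto)

lemma B_lt:
  assumes "B_rho M \<rho> x y < c"
  shows "\<exists>n \<xi>. n \<ge> 1 \<and> (\<forall>i\<le>n. \<xi> i \<in> M) \<and> \<xi> 0 = x \<and> \<xi> n = y \<and> chain_cost \<rho> \<xi> n < c"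
  using assms unfolding B_rho_def INF_less_iff by auto

lemma B_step: "x \<in> M \<Longrightarrow> y \<in> M \<Longrightarrow> B_rho M \<rho> x y \<le> \<rho> x y"
  using B_le[of 1 "\<lambda>i. if i = 0 then x else y" M x y \<rho>]
  by (auto simp: chain_cost_def)

lemma chain_concat:
  assumes "\<xi> n = \<zeta> 0"
  defines "\<theta> \<equiv> \<lambda>i. if i \<le> n then \<xi> i else \<zeta> (i - n)"
  shows "chain_cost \<rho> \<theta> (n + m) = chain_cost \<rho> \<xi> n + chain_cost \<rho> \<zeta> m"
proof -
  have "chain_cost \<rho> \<theta> (n + m) = (\<Sum>i<n. \<rho> (\<theta> i) (\<theta> (Suc i))) + (\<Sum>j<m. \<rho> (\<theta> (n+j)) (\<theta> (Suc (n+j))))"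
    unfolding chain_cost_def by (rule sum_split_add)
  also have "(\<Sum>i<n. \<rho> (\<theta> i) (\<theta> (Suc i))) = chain_cost \<rho> \<xi> n"
    unfolding chain_cost_def by (rule sum.cong) (auto simp: \<theta>_def)
  also have "(\<Sum>j<m. \<rho> (\<theta> (n+j)) (\<theta> (Suc (n+j)))) = chain_cost \<rho> \<zeta> m"
    unfolding chain_cost_def by (rule sum.cong) (use assms in \<open>auto simp: \<theta>_def\<close>)
  finally show ?thesis .
qed

lemma B_trans: "B_rho M \<rho> x z \<le> B_rho M \<rho> x y + B_rho M \<rho> y z"
proof (rule ennreal_le_epsilon)
  fix e :: real
  assume fin: "B_rho M \<rho> x y + B_rho M \<rho> y z < \<top>" and e: "0 < e"
  have f1: "B_rho M \<rho> x y < \<top>" and f2: "B_rho M \<rho> y z < \<top>" using fin by auto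
  have "B_rho M \<rho> x y < B_rho M \<rho> x y + ennreal (e/2)"
    using f1 e by (simp add: ennreal_less_top less_top[symmetric] ennreal_add_left_cancel_less)
  from B_lt[OF this] obtain n \<xi> where c1: "n \<ge> 1" "\<forall>i\<le>n. \<xi> i \<in> M" "\<xi> 0 = x" "\<xi> n = y"
    "chain_cost \<rho> \<xi> n < B_rho M \<rho> x y + ennreal (e/2)" by blast
  have "B_rho M \<rho> y z < B_rho M \<rho> y z + ennreal (e/2)"
    using f2 e by (simp add: less_top[symmetric] ennreal_add_left_cancel_less)
  from B_lt[OF this] obtain m \<zeta> where c2: "m \<ge> 1" "\<forall>i\<le>m. \<zeta> i \<in> M" "\<zeta> 0 = y" "\<zeta> m = z"
    "chain_cost \<rho> \<zeta> m < B_rho M \<rho> y z + ennreal (e/2)" by blast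
  define \<theta> where "\<theta> = (\<lambda>i. if i \<le> n then \<xi> i else \<zeta> (i - n))"
  have cc: "chain_cost \<rho> \<theta> (n + m) = chain_cost \<rho> \<xi> n + chain_cost \<rho> \<zeta> m"
    unfolding \<theta>_def by (rule chain_concat) (use c1 c2 in auto)
  have "B_rho M \<rho> x z \<le> chain_cost \<rho> \<theta> (n + m)"
    by (rule B_le) (use c1 c2 in \<open>auto simp: \<theta>_def\<close>)
  also have "\<dots> \<le> (B_rho M \<rho> x y + ennreal (e/2)) + (B_rho M \<rho> y z + ennreal (e/2))"
    unfolding cc using c1(5) c2(5) by (intro add_mono) auto
  also have "\<dots> = B_rho M \<rho> x y + B_rho M \<rho> y z + ennreal e"
    using e by (simp add: add_ac flip: ennreal_plus)
  finally show "B_rho M \<rho> x z \<le> B_rho M \<rho> x y + B_rho M \<rho> y z + ennreal e" .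
qed

lemma rho_le_trans: "rho_le M \<rho> x y \<Longrightarrow> rho_le M \<rho> y z \<Longrightarrow> rho_le M \<rho> x z"
  unfolding rho_le_def using B_trans[of M \<rho> x z y] by simp

lemma B_orbit:
  assumes "x \<in> M" "F ` M \<subseteq> M" "\<And>u. u \<in> M \<Longrightarrow> \<rho> u (F u) = 0" "k \<ge> 1"
  shows "B_rho M \<rho> x ((F ^^ k) x) = 0"
proof -
  have inM: "(F ^^ i) x \<in> M" for i
    by (induction i) (use assms in auto)
  have "B_rho M \<rho> x ((F ^^ k) x) \<le> chain_cost \<rho> (\<lambda>i. (F ^^ i) x) k"
    by (rule B_le) (use assms inM in auto)
  also have "\<dots> = 0" unfolding chain_cost_def using assms(3) inM by simp
  finally show ?thesis by simp
qed

lemma rho_sim_sym: "rho_sim M \<rho> x y \<Longrightarrow> rho_sim M \<rho> y x"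
  unfolding rho_sim_def by auto

lemma rho_sim_trans: "rho_sim M \<rho> x y \<Longrightarrow> rho_sim M \<rho> y z \<Longrightarrow> rho_sim M \<rho> x z"
  unfolding rho_sim_def using rho_le_trans by metis

lemma class_eq: "rho_sim M \<rho> x w \<Longrightarrow> rho_class M \<rho> w = rho_class M \<rho> x"
  unfolding rho_class_def using rho_sim_trans rho_sim_sym by metis

lemma basic_mem_class:
  assumes "basic_class M \<rho> K" "w \<in> K"
  shows "w \<in> rho_recurrent M \<rho>" "rho_class M \<rho> w = K"
  using assms unfolding basic_class_def rho_class_def
  by (auto intro: rho_sim_trans rho_sim_sym)

lemma recurrent_class: "w \<in> rho_recurrent M \<rho> \<Longrightarrow> basic_class M \<rho> (rho_class M \<rho> w) \<and> w \<in> rho_class M \<rho> w"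
  unfolding basic_class_def rho_class_def rho_recurrent_def by auto

lemma cont_pt:
  fixes g :: "'a::metric_space \<Rightarrow> 'b::metric_space \<Rightarrow> 'c::linorder_topology"
  assumes cg: "continuous_on (A \<times> B) (\<lambda>(x,y). g x y)" and ab: "a \<in> A" "b \<in> B" and lt: "g a b < c"
  shows "\<exists>t>0. \<forall>x\<in>A. \<forall>y\<in>B. dist x a < t \<longrightarrow> dist y b < t \<longrightarrow> g x y < c"
proof -
  from cg[unfolded continuous_on_topological] ab lt
  obtain U where U: "open U" "(a,b) \<in> U" "\<forall>z\<in>A \<times> B. z \<in> U \<longrightarrow> (\<lambda>(x,y). g x y) z \<in> {..<c}"
    by (metis (no_types, lifting) SigmaI case_prod_conv lessThan_iff open_lessThan)
  obtain t where t: "t > 0" "ball (a,b) t \<subseteq> U" using U(1,2) open_contains_ball by blast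
  show ?thesis
  proof (intro exI[of _ "t/2"] conjI ballI impI)
    show "t/2 > 0" using t by simp
    fix x y assume xy: "x \<in> A" "y \<in> B" "dist x a < t/2" "dist y b < t/2"
    have "dist (a,b) (x,y) < t"
      using xy by (simp add: dist_Pair_Pair sqrt_sum_squares_half_less dist_commute)
    then have "(x,y) \<in> U" using t by auto
    then show "g x y < c" using U(3) xy by auto
  qed
qed

lemma unif_small:
  fixes \<rho> :: "'a::metric_space \<Rightarrow> 'a \<Rightarrow> ennreal"
  assumes S: "compact S" "S \<subseteq> M1" "S \<subseteq> M" and FM: "F ` M \<subseteq> M" and Fc: "continuous_on M F"
    and rc: "continuous_on (M1 \<times> M) (\<lambda>(x,y). \<rho> x y)"
    and r0: "\<And>u. u \<in> S \<Longrightarrow> \<rho> u (F u) = 0" and e: "e > 0"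
  shows "\<exists>r>0. \<forall>u\<in>S. \<forall>v\<in>M. dist v (F u) < r \<longrightarrow> \<rho> u v < e"
proof (cases "S = {}")
  case True
  then show ?thesis by (intro exI[of _ 1]) auto
next
  case False
  have "\<forall>u\<in>S. \<exists>t>0. \<forall>x\<in>M1. \<forall>y\<in>M. dist x u < t \<longrightarrow> dist y (F u) < t \<longrightarrow> \<rho> x y < e"
  proof
    fix u assume u: "u \<in> S"
    show "\<exists>t>0. \<forall>x\<in>M1. \<forall>y\<in>M. dist x u < t \<longrightarrow> dist y (F u) < t \<longrightarrow> \<rho> x y < e"
      by (rule cont_pt[OF rc]) (use u S FM r0 e in auto)
  qed
  then obtain t where t: "\<And>u. u \<in> S \<Longrightarrow> t u > 0"
    "\<And>u x y. u \<in> S \<Longrightarrow> x \<in> M1 \<Longrightarrow> y \<in> M \<Longrightarrow> dist x u < t u \<Longrightarrow> dist y (F u) < t u \<Longrightarrow> \<rho> x y < e"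
    by metis
  have "\<forall>u\<in>S. \<exists>s>0. \<forall>x\<in>M. dist x u < s \<longrightarrow> dist (F x) (F u) < t u / 2"
  proof
    fix u assume u: "u \<in> S"
    have "u \<in> M" "t u / 2 > 0" using u S t(1)[OF u] by auto
    then show "\<exists>s>0. \<forall>x\<in>M. dist x u < s \<longrightarrow> dist (F x) (F u) < t u / 2"
      using Fc[unfolded continuous_on_iff] by blast
  qed
  then obtain s where s: "\<And>u. u \<in> S \<Longrightarrow> s u > 0"
    "\<And>u x. u \<in> S \<Longrightarrow> x \<in> M \<Longrightarrow> dist x u < s u \<Longrightarrow> dist (F x) (F u) < t u / 2"
    by metis
  have "S \<subseteq> (\<Union>u\<in>S. ball u (min (s u) (t u)))"
  proof
    fix x assume "x \<in> S" then show "x \<in> (\<Union>u\<in>S. ball u (min (s u) (t u)))" using s(1) t(1) by (intro UN_I[of x]) auto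
  qed
  then obtain T where T: "T \<subseteq> S" "finite T" "S \<subseteq> (\<Union>u\<in>T. ball u (min (s u) (t u)))"
    using compactE_image[OF S(1), of S "\<lambda>u. ball u (min (s u) (t u))"] by auto
  have Tne: "T \<noteq> {}" using T False by auto
  define r where "r = Min ((\<lambda>u. t u / 2) ` T)"
  have rpos: "r > 0" unfolding r_def using T Tne t by (subst Min_gr_iff) auto
  have rle: "u \<in> T \<Longrightarrow> r \<le> t u / 2" for u unfolding r_def using T(2) by (intro Min_le) auto
  show ?thesis
  proof (intro exI[of _ r] conjI ballI impI rpos)
    fix u' v assume u': "u' \<in> S" and v: "v \<in> M" and d: "dist v (F u') < r"
    obtain u where u: "u \<in> T" "dist u u' < min (s u) (t u)" using T(3) u' by auto
    have uS: "u \<in> S" using u T by auto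
    have "dist (F u') (F u) < t u / 2"
      using s(2)[OF uS, of u'] u' S u by (auto simp: dist_commute)
    then have "dist v (F u) < t u"
      using d rle[OF u(1)] dist_triangle[of v "F u" "F u'"] by linarith
    moreover have "dist u' u < t u" using u by (simp add: dist_commute)
    ultimately show "\<rho> u' v < e" using t(2)[OF uS, of u' v] u' S v by auto
  qed
qed

lemma chain_cost_Suc: "chain_cost \<rho> \<xi> (Suc m) = \<rho> (\<xi> 0) (\<xi> 1) + chain_cost \<rho> (\<lambda>i. \<xi> (Suc i)) m"
  unfolding chain_cost_def by (simp only: sum.lessThan_Suc_shift One_nat_def)

lemma chain_escape:
  fixes \<rho> :: "'a::heine_borel \<Rightarrow> 'a \<Rightarrow> ennreal" and p :: "real \<Rightarrow> 'a \<Rightarrow> 'a measure"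
  assumes p_prob: "\<And>\<epsilon> x. \<epsilon> > 0 \<Longrightarrow> x \<in> M \<Longrightarrow> prob_space (p \<epsilon> x)"
    and p_meas: "\<And>\<epsilon>. \<epsilon> > 0 \<Longrightarrow> p \<epsilon> \<in> borel \<rightarrow>\<^sub>M subprob_algebra borel"
    and LD_i: "continuous_on (M1 \<times> M) (\<lambda>(x, y). \<rho> x y)"
    and LD_iv: "\<And>K c r \<eta>. compact K \<Longrightarrow> K \<subseteq> M1 \<Longrightarrow> c \<in> M \<Longrightarrow> r > 0 \<Longrightarrow> \<eta> > 0 \<Longrightarrow>
        \<exists>\<epsilon>0>0. \<forall>x\<in>K. \<forall>\<epsilon>. 0 < \<epsilon> \<and> \<epsilon> < \<epsilon>0 \<longrightarrow>
          ((INF y\<in>ball c r \<inter> M. \<rho> x y) < \<top> \<longrightarrow>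
            emeasure (p \<epsilon> x) (ball c r \<inter> M)
              \<ge> ennreal (exp (- (enn2real (INF y\<in>ball c r \<inter> M. \<rho> x y) + \<eta>) / \<epsilon>)))"
    and M1open: "\<And>x. x \<in> M1 \<Longrightarrow> \<exists>r>0. ball x r \<inter> M \<subseteq> M1"
    and Mc: "closed M"
    and V: "V \<in> sets borel" "V \<subseteq> S" "closed S"
    and eta: "\<eta>' > 0"
  shows "\<forall>\<xi>. (\<forall>i\<le>m. \<xi> i \<in> M) \<longrightarrow> (\<forall>i<m. \<xi> i \<in> M1) \<longrightarrow> \<xi> m \<notin> S \<longrightarrow> chain_cost \<rho> \<xi> m < \<top> \<longrightarrow>
   (\<exists>r>0. \<exists>\<epsilon>0>0. \<forall>\<epsilon>. 0 < \<epsilon> \<and> \<epsilon> < \<epsilon>0 \<longrightarrow>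
      (\<forall>x \<in> ball (\<xi> 0) r \<inter> M. stay_prob (p \<epsilon>) V m x \<le> 1 - exp (- (enn2real (chain_cost \<rho> \<xi> m) + real m * \<eta>') / \<epsilon>)))"
proof (induction m)
  case 0
  show ?case
  proof (intro allI impI)
    fix \<xi> :: "nat \<Rightarrow> 'a" assume h: "\<forall>i\<le>0. \<xi> i \<in> M" "\<forall>i<0. \<xi> i \<in> M1" "\<xi> 0 \<notin> S" "chain_cost \<rho> \<xi> 0 < \<top>"
    obtain r where r: "r > 0" "ball (\<xi> 0) r \<subseteq> - S"
      using open_contains_ball[of "- S"] V(3) h(3) by (auto simp: open_Compl)
    show "\<exists>r>0. \<exists>\<epsilon>0>0. \<forall>\<epsilon>. 0 < \<epsilon> \<and> \<epsilon> < \<epsilon>0 \<longrightarrow>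
      (\<forall>x \<in> ball (\<xi> 0) r \<inter> M. stay_prob (p \<epsilon>) V 0 x \<le> 1 - exp (- (enn2real (chain_cost \<rho> \<xi> 0) + real 0 * \<eta>') / \<epsilon>))"
      using r V(2) by (intro exI[of _ r] conjI exI[of _ 1]) (auto simp: chain_cost_def indicator_def)
  qed
next
  case (Suc m)
  show ?case
  proof (intro allI impI)
    fix \<xi> :: "nat \<Rightarrow> 'a"
    assume h: "\<forall>i\<le>Suc m. \<xi> i \<in> M" "\<forall>i<Suc m. \<xi> i \<in> M1" "\<xi> (Suc m) \<notin> S" "chain_cost \<rho> \<xi> (Suc m) < \<top>"
    define \<xi>' where "\<xi>' = (\<lambda>i. \<xi> (Suc i))"
    have cc: "chain_cost \<rho> \<xi> (Suc m) = \<rho> (\<xi> 0) (\<xi> 1) + chain_cost \<rho> \<xi>' m"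
      unfolding \<xi>'_def by (rule chain_cost_Suc)
    have afin: "\<rho> (\<xi> 0) (\<xi> 1) < \<top>" and cfin: "chain_cost \<rho> \<xi>' m < \<top>" using h(4) cc by auto
    from Suc.IH[rule_format, of \<xi>'] h cfin
    obtain r1 \<epsilon>1 where r1: "r1 > 0" "\<epsilon>1 > 0"
      "\<And>\<epsilon> y. 0 < \<epsilon> \<Longrightarrow> \<epsilon> < \<epsilon>1 \<Longrightarrow> y \<in> ball (\<xi> 1) r1 \<inter> M \<Longrightarrow>
         stay_prob (p \<epsilon>) V m y \<le> 1 - exp (- (enn2real (chain_cost \<rho> \<xi>' m) + real m * \<eta>') / \<epsilon>)"
      unfolding \<xi>'_def by auto
    define A where "A = enn2real (\<rho> (\<xi> 0) (\<xi> 1))"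
    define C where "C = enn2real (chain_cost \<rho> \<xi>' m)"
    have A0: "A \<ge> 0" "C \<ge> 0" unfolding A_def C_def by auto
    have aA: "\<rho> (\<xi> 0) (\<xi> 1) = ennreal A" unfolding A_def using afin by (simp add: less_top)
    have cC: "chain_cost \<rho> \<xi>' m = ennreal C" unfolding C_def using cfin by (simp add: less_top)
    have tot: "enn2real (chain_cost \<rho> \<xi> (Suc m)) = A + C"
      unfolding cc aA cC using A0 by (simp flip: ennreal_plus)
    have x0: "\<xi> 0 \<in> M1" "\<xi> 1 \<in> M" using h by auto
    have "\<rho> (\<xi> 0) (\<xi> 1) < ennreal (A + \<eta>'/2)" using aA eta A0 by (simp add: ennreal_lessI)
    from cont_pt[OF LD_i _ _ this] x0
    obtain t where t: "t > 0" "\<And>x y. x \<in> M1 \<Longrightarrow> y \<in> M \<Longrightarrow> dist x (\<xi> 0) < t \<Longrightarrow> dist y (\<xi> 1) < t \<Longrightarrow>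
       \<rho> x y < ennreal (A + \<eta>'/2)" by blast
    obtain r2 where r2: "r2 > 0" "ball (\<xi> 0) r2 \<inter> M \<subseteq> M1" using M1open[OF x0(1)] by blast
    define r0 where "r0 = min t r2 / 2"
    have r0: "r0 > 0" "r0 < t" "r0 < r2" using t r2 unfolding r0_def by auto
    define K where "K = cball (\<xi> 0) r0 \<inter> M"
    have Kc: "compact K" unfolding K_def using Mc by (intro compact_Int_closed) auto
    have KM1: "K \<subseteq> M1" unfolding K_def using r0 r2 by (auto simp: dist_commute)
    obtain \<epsilon>2 where e2: "\<epsilon>2 > 0" "\<And>x \<epsilon>. x \<in> K \<Longrightarrow> 0 < \<epsilon> \<Longrightarrow> \<epsilon> < \<epsilon>2 \<Longrightarrow>
          (INF y\<in>ball (\<xi> 1) r1 \<inter> M. \<rho> x y) < \<top> \<Longrightarrow>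
            emeasure (p \<epsilon> x) (ball (\<xi> 1) r1 \<inter> M)
              \<ge> ennreal (exp (- (enn2real (INF y\<in>ball (\<xi> 1) r1 \<inter> M. \<rho> x y) + \<eta>'/2) / \<epsilon>))"
      using LD_iv[OF Kc KM1 x0(2) r1(1), of "\<eta>'/2"] eta by auto
    show "\<exists>r>0. \<exists>\<epsilon>0>0. \<forall>\<epsilon>. 0 < \<epsilon> \<and> \<epsilon> < \<epsilon>0 \<longrightarrow>
      (\<forall>x \<in> ball (\<xi> 0) r \<inter> M. stay_prob (p \<epsilon>) V (Suc m) x \<le> 1 - exp (- (enn2real (chain_cost \<rho> \<xi> (Suc m)) + real (Suc m) * \<eta>') / \<epsilon>))"
    proof -
      have main: "stay_prob (p \<epsilon>) V (Suc m) x \<le> 1 - exp (- (enn2real (chain_cost \<rho> \<xi> (Suc m)) + real (Suc m) * \<eta>') / \<epsilon>)"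
        if e: "0 < \<epsilon> \<and> \<epsilon> < min \<epsilon>1 \<epsilon>2" and x: "x \<in> ball (\<xi> 0) r0 \<inter> M" for \<epsilon> x
      proof -
      have xK: "x \<in> K" using x unfolding K_def by auto
      have xM1: "x \<in> M1" using xK KM1 by auto
      define I where "I = (INF y\<in>ball (\<xi> 1) r1 \<inter> M. \<rho> x y)"
      have "I \<le> \<rho> x (\<xi> 1)" unfolding I_def using r1 x0 by (intro INF_lower) auto
      also have "\<dots> < ennreal (A + \<eta>'/2)"
        using t(2)[OF xM1 x0(2)] x r0 t by (auto simp: dist_commute)
      finally have IA: "I < ennreal (A + \<eta>'/2)" .
      then have Ifin: "I < \<top>" using top.not_eq_extremum by fastforce
      have IA': "enn2real I \<le> A + \<eta>'/2"
        using IA A0 eta by (metis enn2real_ennreal enn2real_mono ennreal_less_top less_imp_le add_nonneg_nonneg half_gt_zero less_imp_le)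
      interpret kern "p \<epsilon>" V using p_meas e V by unfold_locales auto
      define Q where "Q = exp (- (C + real m * \<eta>') / \<epsilon>)"
      define a where "a = exp (- (A + \<eta>') / \<epsilon>)"
      have "ennreal a \<le> ennreal (exp (- (enn2real I + \<eta>'/2) / \<epsilon>))"
        unfolding a_def using IA' e by (intro ennreal_leI) (auto simp: divide_simps)
      also have "\<dots> \<le> emeasure (p \<epsilon> x) (ball (\<xi> 1) r1 \<inter> M)"
        using e2(2)[OF xK, of \<epsilon>] e Ifin unfolding I_def by auto
      finally have am: "ennreal a \<le> emeasure (p \<epsilon> x) (ball (\<xi> 1) r1 \<inter> M)" .
      have mn: "0 \<le> real m * \<eta>'" using eta by simp
      have Q01: "0 \<le> Q" "Q \<le> 1" unfolding Q_def using A0 e mn by (auto simp: divide_simps)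
      have "stay_prob (p \<epsilon>) V (Suc m) x \<le> 1 - Q * a"
      proof (rule sp_step[OF p_prob _ Q01])
        show "0 < \<epsilon>" "x \<in> M" using e x by auto
        show "ball (\<xi> 1) r1 \<inter> M \<in> sets borel" using Mc by auto
        show "\<And>y. y \<in> ball (\<xi> 1) r1 \<inter> M \<Longrightarrow> stay_prob (p \<epsilon>) V m y \<le> 1 - Q"
          using r1(3) e unfolding Q_def C_def by auto
        show "0 \<le> a" unfolding a_def by simp
        show "ennreal a \<le> emeasure (p \<epsilon> x) (ball (\<xi> 1) r1 \<inter> M)" by (rule am)
      qed
      also have "Q * a = exp (- (enn2real (chain_cost \<rho> \<xi> (Suc m)) + real (Suc m) * \<eta>') / \<epsilon>)"
        unfolding Q_def a_def tot by (simp add: mult_exp_exp algebra_simps add_divide_distrib diff_divide_distrib)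
      finally have R: "stay_prob (p \<epsilon>) V (Suc m) x \<le> 1 - exp (- (enn2real (chain_cost \<rho> \<xi> (Suc m)) + real (Suc m) * \<eta>') / \<epsilon>)" .
      then show "stay_prob (p \<epsilon>) V (Suc m) x \<le> 1 - exp (- (enn2real (chain_cost \<rho> \<xi> (Suc m)) + real (Suc m) * \<eta>') / \<epsilon>)" .
    qed
    have "min \<epsilon>1 \<epsilon>2 > 0" using r1 e2 by simp
    then show ?thesis using main r0(1) by blast
    qed
  qed
qed

locale setting =
  fixes M M0 M1 :: "(real^'n) set"
    and F :: "real^'n \<Rightarrow> real^'n"
    and p :: "real \<Rightarrow> real^'n \<Rightarrow> (real^'n) measure"
    and \<rho> :: "real^'n \<Rightarrow> real^'n \<Rightarrow> ennreal"
    and Kj :: "(real^'n) set"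
  assumes M_closed: "closed M"
    and M_split: "M = M0 \<union> M1" "M0 \<inter> M1 = {}"
    and M0_closed: "closed M0"
    and F_maps: "F ` M \<subseteq> M" "F ` M0 \<subseteq> M0" "F ` M1 \<subseteq> M1"
    and F_cont: "continuous_on M F"
    and F_bdd: "bounded (F ` M)"
    and p_prob: "\<And>\<epsilon> x. \<epsilon> > 0 \<Longrightarrow> x \<in> M \<Longrightarrow> prob_space (p \<epsilon> x)"
    and p_sets: "\<And>\<epsilon> x. \<epsilon> > 0 \<Longrightarrow> sets (p \<epsilon> x) = sets borel"
    and p_meas: "\<And>\<epsilon>. \<epsilon> > 0 \<Longrightarrow> p \<epsilon> \<in> borel \<rightarrow>\<^sub>M subprob_algebra borel"
    and p_support: "\<And>\<epsilon> x. \<epsilon> > 0 \<Longrightarrow> x \<in> M \<Longrightarrow> emeasure (p \<epsilon> x) M = 1"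
    and p_M0: "\<And>\<epsilon> x. \<epsilon> > 0 \<Longrightarrow> x \<in> M0 \<Longrightarrow> emeasure (p \<epsilon> x) M1 = 0"
    and LD_i: "continuous_on (M1 \<times> M) (\<lambda>(x, y). \<rho> x y)"
    and LD_ii: "\<And>x y. x \<in> M \<Longrightarrow> y \<in> M \<Longrightarrow> \<rho> x y = 0 \<longleftrightarrow> y = F x"
    and LD_iii: "\<And>\<beta>. \<beta> > 0 \<Longrightarrow>
        0 < (INF (x, y)\<in>{(x, y). x \<in> M \<and> y \<in> M \<and> dmax (F x) y > \<beta>}. \<rho> x y)"
    and LD_iv: "\<And>K c r \<eta>. compact K \<Longrightarrow> K \<subseteq> M1 \<Longrightarrow> c \<in> M \<Longrightarrow> r > 0 \<Longrightarrow> \<eta> > 0 \<Longrightarrow>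
        \<exists>\<epsilon>0>0. \<forall>x\<in>K. \<forall>\<epsilon>. 0 < \<epsilon> \<and> \<epsilon> < \<epsilon>0 \<longrightarrow>
          ((INF y\<in>ball c r \<inter> M. \<rho> x y) < \<top> \<longrightarrow>
            emeasure (p \<epsilon> x) (ball c r \<inter> M)
              \<ge> ennreal (exp (- (enn2real (INF y\<in>ball c r \<inter> M. \<rho> x y) + \<eta>) / \<epsilon>)))"
    and LD_v: "\<And>C \<eta>. closed C \<Longrightarrow> C \<subseteq> M \<Longrightarrow> \<eta> > 0 \<Longrightarrow>
        \<exists>\<epsilon>0>0. \<forall>x\<in>M. \<forall>\<epsilon>. 0 < \<epsilon> \<and> \<epsilon> < \<epsilon>0 \<longrightarrow>
          ((INF y\<in>C. \<rho> x y) = \<top> \<longrightarrow> emeasure (p \<epsilon> x) C = 0) \<and>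
          ((INF y\<in>C. \<rho> x y) < \<top> \<longrightarrow>
            emeasure (p \<epsilon> x) C \<le> ennreal (exp ((\<eta> - enn2real (INF y\<in>C. \<rho> x y)) / \<epsilon>)))"
    and classes_fin: "finite {K. basic_class M \<rho> K \<and> K \<subseteq> M1}"
    and classes_closed: "\<And>K. basic_class M \<rho> K \<Longrightarrow> K \<subseteq> M1 \<Longrightarrow> closed K"
    and Kj_class: "basic_class M \<rho> Kj" "Kj \<subseteq> M1"
    and Kj_not_qa: "\<not> quasiattractor M \<rho> Kj"
begin

lemma M1_eq: "M1 = M - M0" using M_split by auto

lemma M1open: "x \<in> M1 \<Longrightarrow> \<exists>r>0. ball x r \<inter> M \<subseteq> M1"
proof -
  assume x: "x \<in> M1"
  then have "x \<in> - M0" using M_split by auto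
  then obtain r where "r > 0" "ball x r \<subseteq> - M0"
    using open_contains_ball[of "- M0"] M0_closed by (auto simp: open_Compl)
  then show ?thesis using M_split by (intro exI[of _ r]) auto
qed

lemma rho0: "u \<in> M \<Longrightarrow> \<rho> u (F u) = 0"
  using LD_ii F_maps(1) by auto

lemma dmax_ge: "\<bar>x$i - y$i\<bar> \<le> dmax x y"
  unfolding dmax_def by (rule Max_ge) auto

lemma dist_le_dmax: fixes x y :: "real^'n" shows "dist x y \<le> real CARD('n) * dmax x y"
proof -
  have "dist x y = norm (x - y)" by (simp add: dist_norm)
  also have "\<dots> \<le> (\<Sum>i\<in>UNIV. \<bar>(x - y)$i\<bar>)" by (rule norm_le_l1_cart)
  also have "\<dots> \<le> (\<Sum>i\<in>(UNIV::'n set). dmax x y)"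
    by (rule sum_mono) (use dmax_ge in auto)
  also have "\<dots> = real CARD('n) * dmax x y" by simp
  finally show ?thesis .
qed

lemma recurrent_near_F:
  assumes w: "w \<in> rho_recurrent M \<rho>"
  shows "\<exists>u\<in>M. dmax (F u) w \<le> 1"
proof -
  define c where "c = (INF (x, y)\<in>{(x, y). x \<in> M \<and> y \<in> M \<and> dmax (F x) y > 1}. \<rho> x y)"
  have c: "c > 0" unfolding c_def by (rule LD_iii) simp
  have wM: "w \<in> M" and B0: "B_rho M \<rho> w w = 0"
    using w unfolding rho_recurrent_def rho_sim_def rho_le_def by auto
  from B_lt[of M \<rho> w w c] B0 c
  obtain n \<xi> where ch: "n \<ge> 1" "\<forall>i\<le>n. \<xi> i \<in> M" "\<xi> 0 = w" "\<xi> n = w" "chain_cost \<rho> \<xi> n < c"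
    by auto
  obtain k where k: "n = Suc k" using ch(1) by (cases n) auto
  have "\<rho> (\<xi> k) (\<xi> (Suc k)) \<le> chain_cost \<rho> \<xi> n"
    unfolding chain_cost_def k by (rule member_le_sum) auto
  then have lt: "\<rho> (\<xi> k) w < c" using ch k by auto
  have uM: "\<xi> k \<in> M" using ch(2) k by auto
  show ?thesis
  proof (rule bexI[OF _ uM], rule ccontr)
    assume "\<not> dmax (F (\<xi> k)) w \<le> 1"
    then have "c \<le> \<rho> (\<xi> k) w" unfolding c_def
      using uM wM by (intro INF_lower2[of "(\<xi> k, w)"]) auto
    then show False using lt by simp
  qed
qed

lemma recurrent_bounded: "bounded (rho_recurrent M \<rho>)"
proof -
  obtain b where b: "\<forall>x\<in>F ` M. norm x \<le> b" using F_bdd bounded_iff by blast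
  show ?thesis unfolding bounded_iff
  proof (intro exI[of _ "b + real CARD('n)"] ballI)
    fix w assume w: "w \<in> rho_recurrent M \<rho>"
    obtain u where u: "u \<in> M" "dmax (F u) w \<le> 1" using recurrent_near_F[OF w] by blast
    have "real CARD('n) * dmax (F u) w \<le> real CARD('n) * 1"
      by (rule mult_left_mono) (use u in auto)
    then have d: "dist (F u) w \<le> real CARD('n)"
      using dist_le_dmax[of "F u" w] by linarith
    have nb: "norm (F u) \<le> b" using b u by auto
    have t: "norm w \<le> norm (F u) + norm (w - F u)" using norm_triangle_ineq[of "F u" "w - F u"] by simp
    have "norm (w - F u) = dist (F u) w" by (simp add: dist_norm norm_minus_commute)
    then show "norm w \<le> b + real CARD('n)" using d nb t by linarith
  qed
qed

lemma Kj_rep: "\<exists>x0\<in>rho_recurrent M \<rho>. Kj = rho_class M \<rho> x0"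
  using Kj_class(1) unfolding basic_class_def by blast

lemma Kj_sub_rec: "Kj \<subseteq> rho_recurrent M \<rho>"
proof -
  obtain x0 where "Kj = rho_class M \<rho> x0" using Kj_rep by blast
  then show ?thesis unfolding rho_class_def by blast
qed

lemma Kj_ne: "Kj \<noteq> {}"
proof -
  obtain x0 where "x0 \<in> rho_recurrent M \<rho>" "Kj = rho_class M \<rho> x0" using Kj_rep by blast
  then show ?thesis using recurrent_class[of x0 M \<rho>] by auto
qed

lemma Kj_compact: "compact Kj"
  using classes_closed[OF Kj_class] recurrent_bounded Kj_sub_rec
  by (simp add: compact_eq_bounded_closed bounded_subset)

lemma Kj_M: "Kj \<subseteq> M"
  using Kj_sub_rec unfolding rho_recurrent_def by blast

lemma exists_eta: "\<exists>\<eta>>0. \<forall>x\<in>M. infdist x Kj \<le> \<eta> \<longrightarrow>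
     x \<in> M1 \<and> (\<forall>K. basic_class M \<rho> K \<and> K \<subseteq> M1 \<and> K \<noteq> Kj \<longrightarrow> x \<notin> K)"
proof -
  define T where "T = M0 \<union> \<Union>{K. basic_class M \<rho> K \<and> K \<subseteq> M1 \<and> K \<noteq> Kj}"
  have "closed (\<Union>{K. basic_class M \<rho> K \<and> K \<subseteq> M1 \<and> K \<noteq> Kj})"
  proof (rule closed_Union)
    show "finite {K. basic_class M \<rho> K \<and> K \<subseteq> M1 \<and> K \<noteq> Kj}"
      by (rule finite_subset[OF _ classes_fin]) blast
    show "\<forall>K\<in>{K. basic_class M \<rho> K \<and> K \<subseteq> M1 \<and> K \<noteq> Kj}. closed K"
      using classes_closed by blast
  qed
  then have Tc: "closed T" unfolding T_def using M0_closed by auto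
  have disj: "Kj \<inter> T = {}"
  proof -
    have "Kj \<inter> M0 = {}" using Kj_class(2) M_split by auto
    moreover have "w \<notin> K" if "w \<in> Kj" "basic_class M \<rho> K" "K \<noteq> Kj" for w K
    proof
      assume "w \<in> K"
      then have "rho_class M \<rho> w = K" using basic_mem_class(2)[OF that(2)] by blast
      moreover have "rho_class M \<rho> w = Kj" using basic_mem_class(2)[OF Kj_class(1) that(1)] .
      ultimately show False using that(3) by simp
    qed
    ultimately show ?thesis unfolding T_def by blast
  qed
  obtain d where d: "d > 0" "\<forall>x\<in>Kj. \<forall>y\<in>T. d \<le> dist x y"
    using separate_compact_closed[OF Kj_compact Tc disj] by blast
  show ?thesis
  proof (intro exI[of _ "d/2"] conjI ballI impI)
    show "d/2 > 0" using d by simp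
    fix x assume x: "x \<in> M" "infdist x Kj \<le> d/2"
    obtain y where y: "y \<in> Kj" "infdist x Kj = dist x y"
      using infdist_attains_inf[OF classes_closed[OF Kj_class] Kj_ne] by blast
    have xT: "x \<notin> T"
    proof
      assume "x \<in> T"
      then have "d \<le> dist y x" using d y by auto
      then show False using x y d by (simp add: dist_commute)
    qed
    then show "x \<in> M1" using x M_split unfolding T_def by auto
    show "\<forall>K. basic_class M \<rho> K \<and> K \<subseteq> M1 \<and> K \<noteq> Kj \<longrightarrow> x \<notin> K"
      using xT unfolding T_def by auto
  qed
qed

end

locale setting2 = setting +
  fixes \<eta> :: real
  assumes eta_pos: "\<eta> > 0"
    and eta_sep: "\<And>x. x \<in> M \<Longrightarrow> infdist x Kj \<le> \<eta> \<Longrightarrow>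
     x \<in> M1 \<and> (\<forall>K. basic_class M \<rho> K \<and> K \<subseteq> M1 \<and> K \<noteq> Kj \<longrightarrow> x \<notin> K)"
begin

definition "S = {x\<in>M. infdist x Kj \<le> \<eta>}"
definition "V = nbhd M \<eta> Kj"

lemma V_char: "V = {x\<in>M. \<exists>y\<in>Kj. dist x y < \<eta>}"
  unfolding V_def nbhd_def by (auto simp: INF_less_iff)

lemma S_closed: "closed S"
proof -
  have "S = M \<inter> {x. infdist x Kj \<le> \<eta>}" by (auto simp: S_def)
  moreover have "closed {x. infdist x Kj \<le> \<eta>}" by (intro closed_Collect_le continuous_intros)
  ultimately show ?thesis using M_closed by (simp add: closed_Int)
qed

lemma S_sub: "S \<subseteq> M" "S \<subseteq> M1" using eta_sep unfolding S_def by auto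

lemma S_bounded: "bounded S"
proof -
  obtain b where b: "\<forall>x\<in>Kj. norm x \<le> b" using Kj_compact compact_imp_bounded bounded_iff by blast
  show ?thesis unfolding bounded_iff
  proof (intro exI[of _ "b + \<eta>"] ballI)
    fix x assume x: "x \<in> S"
    obtain y where y: "y \<in> Kj" "infdist x Kj = dist x y"
      using infdist_attains_inf[OF classes_closed[OF Kj_class] Kj_ne] by blast
    have "norm x \<le> norm y + dist x y"
      using norm_triangle_ineq[of y "x - y"] by (simp add: dist_norm)
    moreover have "norm y \<le> b" using b y by blast
    moreover have "infdist x Kj \<le> \<eta>" using x unfolding S_def by blast
    ultimately show "norm x \<le> b + \<eta>" using y by linarith
  qed
qed

lemma S_compact: "compact S"
  using S_closed S_bounded by (simp add: compact_eq_bounded_closed)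

lemma V_sub_S: "V \<subseteq> S"
proof
  fix x assume "x \<in> V"
  then obtain y where "x \<in> M" "y \<in> Kj" "dist x y < \<eta>" unfolding V_char by blast
  then show "x \<in> S" unfolding S_def using infdist_le[of y Kj x] by auto
qed

lemma Kj_sub_S: "Kj \<subseteq> S"
  unfolding S_def using Kj_M eta_pos by auto

lemma V_borel: "V \<in> sets borel"
proof -
  have "V = M \<inter> (\<Union>y\<in>Kj. ball y \<eta>)" unfolding V_char by (auto simp: dist_commute)
  moreover have "M \<inter> (\<Union>y\<in>Kj. ball y \<eta>) \<in> sets borel" using M_closed by (intro sets.Int borel_closed borel_open open_UN) auto
  ultimately show ?thesis by simp
qed

end

context setting2 begin

lemma exit_other:
  assumes wS: "w \<in> S" and wr: "w \<in> rho_recurrent M \<rho>" and ne: "rho_class M \<rho> w \<noteq> Kj"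
  shows "\<exists>u\<in>M. u \<notin> S \<and> rho_le M \<rho> w u"
proof -
  have bc: "basic_class M \<rho> (rho_class M \<rho> w)" and ww: "w \<in> rho_class M \<rho> w"
    using recurrent_class[OF wr] by auto
  have "\<not> rho_class M \<rho> w \<subseteq> M1"
  proof
    assume "rho_class M \<rho> w \<subseteq> M1"
    then have "w \<notin> rho_class M \<rho> w"
      using eta_sep[of w] wS ne bc unfolding S_def by blast
    then show False using ww by simp
  qed
  then obtain u where u: "u \<in> rho_class M \<rho> w" "u \<notin> M1" by blast
  have uM: "u \<in> M" using u(1) unfolding rho_class_def rho_recurrent_def by blast
  have "rho_sim M \<rho> w u" using u(1) unfolding rho_class_def by blast
  then have "rho_le M \<rho> w u" unfolding rho_sim_def by blast
  moreover have "u \<notin> S" using u(2) S_sub by blast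
  ultimately show ?thesis using uM by blast
qed

lemma exit_rec:
  assumes wS: "w \<in> S" and wr: "w \<in> rho_recurrent M \<rho>"
  shows "\<exists>u\<in>M. u \<notin> S \<and> rho_le M \<rho> w u"
proof (cases "rho_class M \<rho> w = Kj")
  case False
  then show ?thesis using exit_other[OF wS wr] by blast
next
  case True
  have wK: "w \<in> Kj" using recurrent_class[OF wr] True by auto
  have "\<not> (\<forall>K'. basic_class M \<rho> K' \<and> class_le M \<rho> Kj K' \<longrightarrow> K' = Kj)"
    using Kj_not_qa Kj_class(1) unfolding quasiattractor_def by blast
  then obtain K' where K': "basic_class M \<rho> K'" "class_le M \<rho> Kj K'" "K' \<noteq> Kj" by blast
  then obtain a b where ab: "a \<in> Kj" "b \<in> K'" "rho_le M \<rho> a b" unfolding class_le_def by blast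
  obtain x0 where x0: "x0 \<in> rho_recurrent M \<rho>" "Kj = rho_class M \<rho> x0" using Kj_rep by blast
  have "rho_sim M \<rho> x0 w" "rho_sim M \<rho> x0 a" using wK ab(1) x0 unfolding rho_class_def by auto
  then have "rho_sim M \<rho> w a" using rho_sim_sym rho_sim_trans by metis
  then have wb: "rho_le M \<rho> w b" using ab(3) rho_le_trans unfolding rho_sim_def by metis
  have br: "b \<in> rho_recurrent M \<rho>" and bK: "rho_class M \<rho> b = K'"
    using basic_mem_class[OF K'(1) ab(2)] by auto
  have bM: "b \<in> M" using br unfolding rho_recurrent_def by blast
  show ?thesis
  proof (cases "b \<in> S")
    case False
    then show ?thesis using wb bM by blast
  next
    case bS: True
    obtain u where u: "u \<in> M" "u \<notin> S" "rho_le M \<rho> b u"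
      using exit_other[OF bS br] bK K'(3) by auto
    then show ?thesis using wb rho_le_trans by metis
  qed
qed


lemma orbit_M: "z \<in> M \<Longrightarrow> (F ^^ k) z \<in> M"
  by (induction k) (use F_maps(1) in auto)

lemma unif_S: "e > 0 \<Longrightarrow> \<exists>r>0. \<forall>u\<in>S. \<forall>v\<in>M. dist v (F u) < r \<longrightarrow> \<rho> u v < e"
  by (rule unif_small[OF S_compact S_sub(2) S_sub(1) F_maps(1) F_cont LD_i]) (use rho0 S_sub in auto)

lemma B0_from_eps:
  assumes "\<And>e::real. 0 < e \<Longrightarrow> B_rho M \<rho> x y \<le> ennreal e"
  shows "B_rho M \<rho> x y = 0"
proof -
  have "B_rho M \<rho> x y \<le> 0"
    by (rule ennreal_le_epsilon) (use assms in auto)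
  then show ?thesis by simp
qed

lemma D:
  assumes zS: "z \<in> S"
  shows "\<exists>u\<in>M. u \<notin> S \<and> rho_le M \<rho> z u"
proof (cases "\<exists>k. (F ^^ k) z \<notin> S")
  case True
  then obtain k where k: "(F ^^ k) z \<notin> S" by blast
  have k1: "k \<ge> 1" using k zS by (cases k) auto
  have zM: "z \<in> M" using zS S_sub by blast
  have "B_rho M \<rho> z ((F ^^ k) z) = 0"
    by (rule B_orbit[of _ M F \<rho>, OF zM F_maps(1) rho0 k1])
  then show ?thesis using k orbit_M[OF zM] unfolding rho_le_def by blast
next
  case False
  then have orbS: "\<And>k. (F ^^ k) z \<in> S" by blast
  have zM: "z \<in> M" using zS S_sub by blast
  obtain w \<sigma> where w: "w \<in> S" "strict_mono \<sigma>" "((\<lambda>k. (F ^^ k) z) \<circ> \<sigma>) \<longlonglongrightarrow> w"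
    using seq_compactE[OF compact_imp_seq_compact[OF S_compact], of "\<lambda>k. (F ^^ k) z"] orbS by blast
  have wM: "w \<in> M" using w(1) S_sub by blast
  have lim: "\<And>r. r > 0 \<Longrightarrow> \<exists>N. \<forall>l\<ge>N. dist ((F ^^ (\<sigma> l)) z) w < r"
    using w(3) unfolding lim_sequentially by auto
  have sig: "\<And>l. l \<le> \<sigma> l" using w(2) by (simp add: seq_suble)
  have A1: "\<exists>j\<ge>N. \<rho> ((F ^^ j) z) w < e" if e: "e > 0" for e N
  proof -
    obtain r where r: "r > 0" "\<forall>u\<in>S. \<forall>v\<in>M. dist v (F u) < r \<longrightarrow> \<rho> u v < e" using unif_S[OF e] by blast
    obtain N0 where N0: "\<forall>l\<ge>N0. dist ((F ^^ (\<sigma> l)) z) w < r" using lim[OF r(1)] by blast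
    define l where "l = max N0 (Suc N)"
    have l: "\<sigma> l \<ge> Suc N" "dist ((F ^^ (\<sigma> l)) z) w < r"
      using N0 sig[of l] unfolding l_def by auto
    define j where "j = \<sigma> l - 1"
    have j: "Suc j = \<sigma> l" "j \<ge> N" using l(1) unfolding j_def by auto
    have "F ((F ^^ j) z) = (F ^^ (\<sigma> l)) z" using j(1) by (metis comp_apply funpow.simps(2))
    then have "dist w (F ((F ^^ j) z)) < r" using l(2) by (simp add: dist_commute)
    then have "\<rho> ((F ^^ j) z) w < e" using r(2) orbS wM by blast
    then show ?thesis using j(2) by blast
  qed
  have A2: "\<exists>k. \<rho> w ((F ^^ (Suc k)) z) < e" if e: "e > 0" for e
  proof -
    obtain r where r: "r > 0" "\<forall>u\<in>S. \<forall>v\<in>M. dist v (F u) < r \<longrightarrow> \<rho> u v < e" using unif_S[OF e] by blast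
    obtain s where s: "s > 0" "\<forall>x\<in>M. dist x w < s \<longrightarrow> dist (F x) (F w) < r"
      using F_cont[unfolded continuous_on_iff] wM r(1) by blast
    obtain N0 where N0: "\<forall>l\<ge>N0. dist ((F ^^ (\<sigma> l)) z) w < s" using lim[OF s(1)] by blast
    define k where "k = \<sigma> N0"
    have "dist ((F ^^ k) z) w < s" using N0 unfolding k_def by blast
    then have "dist (F ((F ^^ k) z)) (F w) < r" using s(2) orbit_M[OF zM] by blast
    then have "dist ((F ^^ (Suc k)) z) (F w) < r" by simp
    then have "\<rho> w ((F ^^ (Suc k)) z) < e" using r(2) w(1) orbit_M[OF zM] by blast
    then show ?thesis by blast
  qed
  have Bww: "B_rho M \<rho> w w = 0"
  proof (rule B0_from_eps)
    fix e :: real assume e: "0 < e"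
    have e2: "ennreal (e/2) > 0" using e by simp
    obtain k where k: "\<rho> w ((F ^^ (Suc k)) z) < ennreal (e/2)" using A2[OF e2] by blast
    obtain j where j: "j \<ge> Suc (Suc (Suc k))" "\<rho> ((F ^^ j) z) w < ennreal (e/2)" using A1[OF e2] by blast
    define a where "a = (F ^^ (Suc k)) z"
    have aM: "a \<in> M" unfolding a_def using orbit_M[OF zM] .
    have ja: "(F ^^ j) z = (F ^^ (j - Suc k)) a"
    proof -
      have "j = (j - Suc k) + Suc k" using j(1) by simp
      then have "(F ^^ j) z = (F ^^ ((j - Suc k) + Suc k)) z" by simp
      also have "\<dots> = (F ^^ (j - Suc k)) a" unfolding a_def by (simp only: funpow_add comp_apply)
      finally show ?thesis .
    qed
    have Baj: "B_rho M \<rho> a ((F ^^ j) z) = 0"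
      unfolding ja by (rule B_orbit[of _ M F \<rho>, OF aM F_maps(1) rho0]) (use j(1) in auto)
    have "B_rho M \<rho> w w \<le> B_rho M \<rho> w a + B_rho M \<rho> a w" by (rule B_trans)
    also have "B_rho M \<rho> a w \<le> B_rho M \<rho> a ((F ^^ j) z) + B_rho M \<rho> ((F ^^ j) z) w" by (rule B_trans)
    also have "B_rho M \<rho> w a \<le> \<rho> w a" by (rule B_step[OF wM aM])
    also have "B_rho M \<rho> ((F ^^ j) z) w \<le> \<rho> ((F ^^ j) z) w" by (rule B_step[OF orbit_M[OF zM] wM])
    finally have "B_rho M \<rho> w w \<le> \<rho> w a + (0 + \<rho> ((F ^^ j) z) w)" unfolding Baj
      by (simp add: add_mono)
    also have "\<dots> \<le> ennreal (e/2) + ennreal (e/2)"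
      using k j(2) unfolding a_def by (intro add_mono) auto
    also have "\<dots> = ennreal e" using e by (simp flip: ennreal_plus)
    finally show "B_rho M \<rho> w w \<le> ennreal e" .
  qed
  have Bzw: "B_rho M \<rho> z w = 0"
  proof (rule B0_from_eps)
    fix e :: real assume e: "0 < e"
    obtain j where j: "j \<ge> 1" "\<rho> ((F ^^ j) z) w < ennreal e" using A1[of "ennreal e" 1] e by auto
    have "B_rho M \<rho> z w \<le> B_rho M \<rho> z ((F ^^ j) z) + B_rho M \<rho> ((F ^^ j) z) w" by (rule B_trans)
    also have "B_rho M \<rho> z ((F ^^ j) z) = 0" by (rule B_orbit[of _ M F \<rho>, OF zM F_maps(1) rho0 j(1)])
    also have "B_rho M \<rho> ((F ^^ j) z) w \<le> \<rho> ((F ^^ j) z) w" by (rule B_step[OF orbit_M[OF zM] wM])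
    finally show "B_rho M \<rho> z w \<le> ennreal e" using j(2) by simp
  qed
  have wr: "w \<in> rho_recurrent M \<rho>"
    using Bww wM unfolding rho_recurrent_def rho_sim_def rho_le_def by simp
  obtain u where u: "u \<in> M" "u \<notin> S" "rho_le M \<rho> w u" using exit_rec[OF w(1) wr] by blast
  have "rho_le M \<rho> z u" using Bzw u(3) rho_le_trans unfolding rho_le_def by metis
  then show ?thesis using u by blast
qed


lemma cheap_chain:
  assumes zS: "z \<in> S" and d: "\<delta> > 0"
  shows "\<exists>m \<xi>. \<xi> 0 = z \<and> (\<forall>i\<le>m. \<xi> i \<in> M) \<and> (\<forall>i<m. \<xi> i \<in> M1) \<and> \<xi> m \<notin> S \<and> chain_cost \<rho> \<xi> m < ennreal \<delta>"
proof -
  obtain u where u: "u \<in> M" "u \<notin> S" "rho_le M \<rho> z u" using D[OF zS] by blast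
  have "B_rho M \<rho> z u < ennreal \<delta>" using u(3) d unfolding rho_le_def by simp
  from B_lt[OF this] obtain n \<xi> where ch: "n \<ge> 1" "\<forall>i\<le>n. \<xi> i \<in> M" "\<xi> 0 = z" "\<xi> n = u"
    "chain_cost \<rho> \<xi> n < ennreal \<delta>" by blast
  define m where "m = (LEAST i. \<xi> i \<notin> S)"
  have ex: "\<xi> n \<notin> S" using ch u by simp
  have m1: "\<xi> m \<notin> S" unfolding m_def by (rule LeastI[of _ n]) (rule ex)
  have m2: "m \<le> n" unfolding m_def by (rule Least_le) (rule ex)
  have m3: "\<forall>i<m. \<xi> i \<in> M1"
  proof (intro allI impI)
    fix i assume "i < m"
    then have "\<xi> i \<in> S" using not_less_Least[of i "\<lambda>i. \<xi> i \<notin> S"] unfolding m_def by blast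
    then show "\<xi> i \<in> M1" using S_sub by blast
  qed
  have "chain_cost \<rho> \<xi> m \<le> chain_cost \<rho> \<xi> n"
    unfolding chain_cost_def by (rule sum_mono2) (use m2 in auto)
  then have "chain_cost \<rho> \<xi> m < ennreal \<delta>" using ch(5) by simp
  then show ?thesis using ch m1 m2 m3 by (intro exI[of _ m] exI[of _ \<xi>]) auto
qed

lemma unif_bound:
  assumes d: "\<delta> > 0"
  shows "\<exists>L \<epsilon>0. \<epsilon>0 > 0 \<and> (\<forall>\<epsilon>. 0 < \<epsilon> \<and> \<epsilon> < \<epsilon>0 \<longrightarrow> (\<forall>x. stay_prob (p \<epsilon>) V L x \<le> 1 - exp (- (2*\<delta>) / \<epsilon>)))"
proof -
  have "\<forall>z\<in>S. \<exists>m r e. r > 0 \<and> e > 0 \<and> (\<forall>\<epsilon>. 0 < \<epsilon> \<and> \<epsilon> < e \<longrightarrow>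
      (\<forall>x\<in>ball z r \<inter> M. stay_prob (p \<epsilon>) V m x \<le> 1 - exp (- (2*\<delta>) / \<epsilon>)))"
  proof
    fix z assume zS: "z \<in> S"
    obtain m \<xi> where ch: "\<xi> 0 = z" "\<forall>i\<le>m. \<xi> i \<in> M" "\<forall>i<m. \<xi> i \<in> M1" "\<xi> m \<notin> S"
      "chain_cost \<rho> \<xi> m < ennreal \<delta>" using cheap_chain[OF zS d] by blast
    define \<eta>' where "\<eta>' = \<delta> / (real m + 1)"
    have eta': "\<eta>' > 0" unfolding \<eta>'_def using d by simp
    have fin: "chain_cost \<rho> \<xi> m < \<top>" using ch(5) top.not_eq_extremum by fastforce
    have "\<exists>r>0. \<exists>\<epsilon>0>0. \<forall>\<epsilon>. 0 < \<epsilon> \<and> \<epsilon> < \<epsilon>0 \<longrightarrow>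
      (\<forall>x \<in> ball (\<xi> 0) r \<inter> M. stay_prob (p \<epsilon>) V m x \<le> 1 - exp (- (enn2real (chain_cost \<rho> \<xi> m) + real m * \<eta>') / \<epsilon>))"
      using chain_escape[of M p M1 \<rho> V S \<eta>' m, OF p_prob p_meas LD_i LD_iv M1open M_closed V_borel V_sub_S S_closed eta'] ch fin
      by blast
    then obtain r e where re: "r > 0" "e > 0" "\<And>\<epsilon> x. 0 < \<epsilon> \<Longrightarrow> \<epsilon> < e \<Longrightarrow> x \<in> ball z r \<inter> M \<Longrightarrow>
       stay_prob (p \<epsilon>) V m x \<le> 1 - exp (- (enn2real (chain_cost \<rho> \<xi> m) + real m * \<eta>') / \<epsilon>)"
      using ch(1) by blast
    have c1: "enn2real (chain_cost \<rho> \<xi> m) < \<delta>" using ch(5) fin by simp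
    have c2: "real m * \<eta>' \<le> \<delta>" unfolding \<eta>'_def using d by (simp add: field_simps)
    have key: "1 - exp (- (enn2real (chain_cost \<rho> \<xi> m) + real m * \<eta>') / \<epsilon>) \<le> 1 - exp (- (2*\<delta>) / \<epsilon>)"
      if "\<epsilon> > 0" for \<epsilon>
    proof -
      have "- (2*\<delta>) / \<epsilon> \<le> - (enn2real (chain_cost \<rho> \<xi> m) + real m * \<eta>') / \<epsilon>"
        using c1 c2 that by (simp add: divide_simps)
      then show ?thesis by simp
    qed
    show "\<exists>m r e. r > 0 \<and> e > 0 \<and> (\<forall>\<epsilon>. 0 < \<epsilon> \<and> \<epsilon> < e \<longrightarrow>
      (\<forall>x\<in>ball z r \<inter> M. stay_prob (p \<epsilon>) V m x \<le> 1 - exp (- (2*\<delta>) / \<epsilon>)))"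
    proof -
      have "\<forall>\<epsilon>. 0 < \<epsilon> \<and> \<epsilon> < e \<longrightarrow>
        (\<forall>x\<in>ball z r \<inter> M. stay_prob (p \<epsilon>) V m x \<le> 1 - exp (- (2*\<delta>) / \<epsilon>))"
      proof (intro allI impI ballI)
        fix \<epsilon> x assume a: "0 < \<epsilon> \<and> \<epsilon> < e" "x \<in> ball z r \<inter> M"
        show "stay_prob (p \<epsilon>) V m x \<le> 1 - exp (- (2*\<delta>) / \<epsilon>)"
          using re(3)[of \<epsilon> x] key[of \<epsilon>] a by linarith
      qed
      then show ?thesis using re(1,2) by blast
    qed
  qed
  then obtain m r e where mre: "\<And>z. z \<in> S \<Longrightarrow> r z > 0" "\<And>z. z \<in> S \<Longrightarrow> e z > 0"
    "\<And>z \<epsilon> x. z \<in> S \<Longrightarrow> 0 < \<epsilon> \<Longrightarrow> \<epsilon> < e z \<Longrightarrow> x \<in> ball z (r z) \<inter> M \<Longrightarrow>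
        stay_prob (p \<epsilon>) V (m z) x \<le> 1 - exp (- (2*\<delta>) / \<epsilon>)"
    by metis
  have cov: "S \<subseteq> (\<Union>z\<in>S. ball z (r z))"
  proof
    fix x assume "x \<in> S" then show "x \<in> (\<Union>z\<in>S. ball z (r z))" using mre(1) by (intro UN_I[of x]) auto
  qed
  obtain T where T: "T \<subseteq> S" "finite T" "S \<subseteq> (\<Union>z\<in>T. ball z (r z))"
    using compactE_image[OF S_compact, of S "\<lambda>z. ball z (r z)"] cov by auto
  have Tne: "T \<noteq> {}" using T(3) Kj_sub_S Kj_ne by auto
  define L where "L = Max (m ` T)"
  define \<epsilon>0 where "\<epsilon>0 = Min (e ` T)"
  have e0: "\<epsilon>0 > 0" unfolding \<epsilon>0_def using T Tne mre(2) by (subst Min_gr_iff) auto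
  have e0le: "z \<in> T \<Longrightarrow> \<epsilon>0 \<le> e z" for z unfolding \<epsilon>0_def using T(2) by (intro Min_le) auto
  have Lge: "z \<in> T \<Longrightarrow> m z \<le> L" for z unfolding L_def using T(2) by (intro Max_ge) auto
  show ?thesis
  proof (intro exI[of _ L] exI[of _ \<epsilon>0] conjI e0 allI impI)
    fix \<epsilon> x assume e: "0 < \<epsilon> \<and> \<epsilon> < \<epsilon>0"
    interpret kern "p \<epsilon>" V using p_meas e V_borel by unfold_locales auto
    show "stay_prob (p \<epsilon>) V L x \<le> 1 - exp (- (2*\<delta>) / \<epsilon>)"
    proof (cases "x \<in> V")
      case False
      have "exp (- (2*\<delta>) / \<epsilon>) \<le> 1" using d e by (simp add: divide_simps)
      then show ?thesis using sp_out[OF False] by simp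
    next
      case True
      then have xS: "x \<in> S" "x \<in> M" using V_sub_S S_sub by auto
      then obtain z where z: "z \<in> T" "x \<in> ball z (r z)" using T(3) by blast
      have "stay_prob (p \<epsilon>) V L x \<le> stay_prob (p \<epsilon>) V (m z) x"
        by (rule sp_antimono[OF Lge[OF z(1)]])
      also have "\<dots> \<le> 1 - exp (- (2*\<delta>) / \<epsilon>)"
        using mre(3)[of z \<epsilon> x] z T(1) e e0le[OF z(1)] xS by auto
      finally show ?thesis .
    qed
  qed
qed


lemma final:
  assumes g: "\<gamma> > 0"
  shows "\<exists>\<epsilon>0>0. \<exists>\<zeta> :: real \<Rightarrow> real.
           (\<forall>\<epsilon>. 0 < \<epsilon> \<and> \<epsilon> < \<epsilon>0 \<longrightarrow> \<zeta> \<epsilon> \<in> {0..1}) \<and>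
           (\<zeta> \<longlongrightarrow> 0) (at_right 0) \<and>
           (\<forall>\<epsilon>. 0 < \<epsilon> \<and> \<epsilon> < \<epsilon>0 \<longrightarrow>
              (\<forall>x\<in>nbhd M \<eta> Kj.
                 exit_later (p \<epsilon>) (nbhd M \<eta> Kj) (exp (\<gamma> / \<epsilon>)) x \<le> \<zeta> \<epsilon>))"
proof -
  define \<delta> where "\<delta> = \<gamma> / 4"
  have d: "\<delta> > 0" unfolding \<delta>_def using g by simp
  obtain L0 \<epsilon>0 where L0: "\<epsilon>0 > 0" "\<And>\<epsilon> x. 0 < \<epsilon> \<Longrightarrow> \<epsilon> < \<epsilon>0 \<Longrightarrow> stay_prob (p \<epsilon>) V L0 x \<le> 1 - exp (- (2*\<delta>) / \<epsilon>)"
    using unif_bound[OF d] by blast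
  define L where "L = Suc L0"
  have Lpos: "real L > 0" unfolding L_def by simp
  define \<zeta> where "\<zeta> = (\<lambda>\<epsilon>::real. min 1 (exp (1 - (exp (\<gamma>/(2*\<epsilon>)) - 1) / real L)))"
  have lim0: "((\<lambda>\<epsilon>::real. exp (1 - (exp (\<gamma>/(2*\<epsilon>)) - 1) / real L)) \<longlongrightarrow> 0) (at_right 0)"
    using g Lpos by real_asymp
  have lim: "(\<zeta> \<longlongrightarrow> 0) (at_right 0)"
  proof -
    have "((\<lambda>\<epsilon>::real. min 1 (exp (1 - (exp (\<gamma>/(2*\<epsilon>)) - 1) / real L))) \<longlongrightarrow> min 1 0) (at_right 0)"
      by (intro tendsto_min tendsto_const lim0)
    then show ?thesis unfolding \<zeta>_def by simp
  qed
  have bound: "exit_later (p \<epsilon>) V (exp (\<gamma> / \<epsilon>)) x \<le> \<zeta> \<epsilon>" if e: "0 < \<epsilon>" "\<epsilon> < \<epsilon>0" for \<epsilon> x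
  proof -
    interpret kern "p \<epsilon>" V using p_meas e V_borel by unfold_locales auto
    define q where "q = exp (- (2*\<delta>) / \<epsilon>)"
    have q01: "0 < q" "q \<le> 1" unfolding q_def using d e by (auto simp: divide_simps)
    have qt: "q * exp (\<gamma> / \<epsilon>) = exp (\<gamma>/(2*\<epsilon>))"
    proof -
      have "q * exp (\<gamma> / \<epsilon>) = exp (- (2*\<delta>) / \<epsilon> + \<gamma> / \<epsilon>)" unfolding q_def by (simp only: exp_add)
      also have "- (2*\<delta>) / \<epsilon> + \<gamma> / \<epsilon> = \<gamma>/(2*\<epsilon>)" unfolding \<delta>_def using e by (simp add: field_simps)
      finally show ?thesis .
    qed
    have bL: "stay_prob (p \<epsilon>) V L y \<le> 1 - q" for y
      using sp_antimono[of L0 L y] L0(2)[OF e, of y] unfolding L_def q_def by simp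
    define t where "t = exp (\<gamma> / \<epsilon>)"
    define N where "N = nat \<lfloor>t\<rfloor>"
    define k where "k = N div L"
    have tpos: "t > 0" unfolding t_def by simp
    have Nt: "real N \<ge> t - 1" unfolding N_def using tpos by linarith
    have kL: "k * L \<le> N" unfolding k_def by (simp add: div_times_less_eq_dividend)
    have Nk: "real N < (real k + 1) * real L"
    proof -
      have e1: "N div L * L + N mod L = N" by (rule div_mult_mod_eq)
      have e2: "N mod L < L" using Lpos by simp
      have "N < N div L * L + L" using e1 e2 by linarith
      then have "N < (k + 1) * L" unfolding k_def by simp
      then have "real N < real ((k + 1) * L)" by linarith
      then show ?thesis by (simp add: algebra_simps)
    qed
    have kge: "real k \<ge> real N / real L - 1"
      using Nk Lpos by (simp add: field_simps)
    have sp1: "stay_prob (p \<epsilon>) V N x \<le> stay_prob (p \<epsilon>) V (k * L) x" by (rule sp_antimono[OF kL])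
    also have "\<dots> \<le> (1 - q) ^ k" by (rule sp_pow[OF bL])
    also have "\<dots> \<le> exp (- q) ^ k"
      by (rule power_mono) (use q01 exp_ge_add_one_self[of "-q"] in auto)
    also have "\<dots> = exp (- q * real k)" by (simp add: exp_of_nat_mult[symmetric] mult.commute)
    also have "\<dots> \<le> exp (1 - (exp (\<gamma>/(2*\<epsilon>)) - 1) / real L)"
    proof -
      have f1: "q * real k \<ge> q * (real N / real L) - q"
      proof -
        have "q * real k \<ge> q * (real N / real L - 1)" using kge q01 by (simp add: mult_left_mono)
        then show ?thesis by (simp add: right_diff_distrib)
      qed
      have f2: "q * (real N / real L) \<ge> q * ((t - 1) / real L)"
        using Nt q01 Lpos by (intro mult_left_mono divide_right_mono) auto
      have f3: "q * ((t - 1) / real L) = (exp (\<gamma>/(2*\<epsilon>)) - q) / real L"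
        using qt unfolding t_def by (simp add: field_simps)
      have f4: "(exp (\<gamma>/(2*\<epsilon>)) - q) / real L \<ge> (exp (\<gamma>/(2*\<epsilon>)) - 1) / real L"
        using q01 Lpos by (intro divide_right_mono) auto
      have "q * real k \<ge> (exp (\<gamma>/(2*\<epsilon>)) - 1) / real L - 1"
        using f1 f2 f3 f4 q01 by linarith
      then show ?thesis by simp
    qed
    finally have A: "stay_prob (p \<epsilon>) V N x \<le> exp (1 - (exp (\<gamma>/(2*\<epsilon>)) - 1) / real L)" .
    have B: "stay_prob (p \<epsilon>) V N x \<le> 1" using sp_bounds by blast
    show ?thesis unfolding exit_later_def \<zeta>_def N_def[symmetric, unfolded t_def] using A B
      unfolding N_def t_def by simp
  qed
  show ?thesis
  proof (intro exI[of _ \<epsilon>0] conjI L0(1) exI[of _ \<zeta>] lim allI impI ballI)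
    fix \<epsilon> assume "0 < \<epsilon> \<and> \<epsilon> < \<epsilon>0"
    then show "\<zeta> \<epsilon> \<in> {0..1}" unfolding \<zeta>_def by auto
  next
    fix \<epsilon> x assume "0 < \<epsilon> \<and> \<epsilon> < \<epsilon>0" "x \<in> nbhd M \<eta> Kj"
    then show "exit_later (p \<epsilon>) (nbhd M \<eta> Kj) (exp (\<gamma> / \<epsilon>)) x \<le> \<zeta> \<epsilon>"
      using bound[of \<epsilon> x] unfolding V_def by auto
  qed
qed

end

theorem mainTheorem15:
  fixes M M0 M1 :: "(real^'n) set"
    and F :: "real^'n \<Rightarrow> real^'n"
    and p :: "real \<Rightarrow> real^'n \<Rightarrow> (real^'n) measure"
    and \<rho> :: "real^'n \<Rightarrow> real^'n \<Rightarrow> ennreal"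
    and Kj :: "(real^'n) set"
  assumes M_closed: "closed M"
    and M_split: "M = M0 \<union> M1" "M0 \<inter> M1 = {}"
    and M0_closed: "closed M0"
    and F_maps: "F ` M \<subseteq> M" "F ` M0 \<subseteq> M0" "F ` M1 \<subseteq> M1"
    and F_cont: "continuous_on M F"
    and F_bdd: "bounded (F ` M)"
    and p_prob: "\<And>\<epsilon> x. \<epsilon> > 0 \<Longrightarrow> x \<in> M \<Longrightarrow> prob_space (p \<epsilon> x)"
    and p_sets: "\<And>\<epsilon> x. \<epsilon> > 0 \<Longrightarrow> sets (p \<epsilon> x) = sets borel"
    and p_meas: "\<And>\<epsilon>. \<epsilon> > 0 \<Longrightarrow> p \<epsilon> \<in> borel \<rightarrow>\<^sub>M subprob_algebra borel"
    and p_support: "\<And>\<epsilon> x. \<epsilon> > 0 \<Longrightarrow> x \<in> M \<Longrightarrow> emeasure (p \<epsilon> x) M = 1"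
    and p_M0: "\<And>\<epsilon> x. \<epsilon> > 0 \<Longrightarrow> x \<in> M0 \<Longrightarrow> emeasure (p \<epsilon> x) M1 = 0"
    \<comment> \<open>Hypothesis (LD)\<close>
    and LD_i: "continuous_on (M1 \<times> M) (\<lambda>(x, y). \<rho> x y)"
    and LD_ii: "\<And>x y. x \<in> M \<Longrightarrow> y \<in> M \<Longrightarrow> \<rho> x y = 0 \<longleftrightarrow> y = F x"
    and LD_iii: "\<And>\<beta>. \<beta> > 0 \<Longrightarrow>
        0 < (INF (x, y)\<in>{(x, y). x \<in> M \<and> y \<in> M \<and> dmax (F x) y > \<beta>}. \<rho> x y)"
    and LD_iv: "\<And>K c r \<eta>. compact K \<Longrightarrow> K \<subseteq> M1 \<Longrightarrow> c \<in> M \<Longrightarrow> r > 0 \<Longrightarrow> \<eta> > 0 \<Longrightarrow>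
        \<exists>\<epsilon>0>0. \<forall>x\<in>K. \<forall>\<epsilon>. 0 < \<epsilon> \<and> \<epsilon> < \<epsilon>0 \<longrightarrow>
          ((INF y\<in>ball c r \<inter> M. \<rho> x y) < \<top> \<longrightarrow>
            emeasure (p \<epsilon> x) (ball c r \<inter> M)
              \<ge> ennreal (exp (- (enn2real (INF y\<in>ball c r \<inter> M. \<rho> x y) + \<eta>) / \<epsilon>)))"
    and LD_v: "\<And>C \<eta>. closed C \<Longrightarrow> C \<subseteq> M \<Longrightarrow> \<eta> > 0 \<Longrightarrow>
        \<exists>\<epsilon>0>0. \<forall>x\<in>M. \<forall>\<epsilon>. 0 < \<epsilon> \<and> \<epsilon> < \<epsilon>0 \<longrightarrow>
          ((INF y\<in>C. \<rho> x y) = \<top> \<longrightarrow> emeasure (p \<epsilon> x) C = 0) \<and>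
          ((INF y\<in>C. \<rho> x y) < \<top> \<longrightarrow>
            emeasure (p \<epsilon> x) C \<le> ennreal (exp ((\<eta> - enn2real (INF y\<in>C. \<rho> x y)) / \<epsilon>)))"
    \<comment> \<open>finitely many closed basic classes in M1\<close>
    and classes_fin: "finite {K. basic_class M \<rho> K \<and> K \<subseteq> M1}"
    and classes_closed: "\<And>K. basic_class M \<rho> K \<Longrightarrow> K \<subseteq> M1 \<Longrightarrow> closed K"
    and Kj_class: "basic_class M \<rho> Kj" "Kj \<subseteq> M1"
    and Kj_not_qa: "\<not> quasiattractor M \<rho> Kj"
  shows "\<exists>\<eta>>0. \<forall>\<gamma>>0. \<exists>\<epsilon>0>0. \<exists>\<zeta> :: real \<Rightarrow> real.
           (\<forall>\<epsilon>. 0 < \<epsilon> \<and> \<epsilon> < \<epsilon>0 \<longrightarrow> \<zeta> \<epsilon> \<in> {0..1}) \<and>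
           (\<zeta> \<longlongrightarrow> 0) (at_right 0) \<and>
           (\<forall>\<epsilon>. 0 < \<epsilon> \<and> \<epsilon> < \<epsilon>0 \<longrightarrow>
              (\<forall>x\<in>nbhd M \<eta> Kj.
                 exit_later (p \<epsilon>) (nbhd M \<eta> Kj) (exp (\<gamma> / \<epsilon>)) x \<le> \<zeta> \<epsilon>))"
proof -
  interpret setting M M0 M1 F p \<rho> Kj
    by (rule setting.intro) (fact assms)+
  obtain \<eta> where "\<eta> > 0" "\<forall>x\<in>M. infdist x Kj \<le> \<eta> \<longrightarrow>
     x \<in> M1 \<and> (\<forall>K. basic_class M \<rho> K \<and> K \<subseteq> M1 \<and> K \<noteq> Kj \<longrightarrow> x \<notin> K)"
    using exists_eta by blast
  then interpret s2: setting2 M M0 M1 F p \<rho> Kj \<eta>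
    by unfold_locales auto
  show ?thesis using s2.final \<open>\<eta> > 0\<close> by blast
qed

end
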